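(* Let $G$ be a graph and $k > \Gamma(G)$ an integer. If $D_k(G)$ is connected, then $D_{k+1}(G)$ is connected.
   Context: All graphs are finite and simple. A set $S \subseteq V(G)$ is a dominating set of $G$ if every vertex of $V(G)\setminus S$ is adjacent to a vertex of $S$; it is a minimal dominating set if no proper subset of it is a dominating set. $\gamma(G)$ is the minimum cardinality of a dominating set of $G$, and $\Gamma(G)$ is the maximum cardinality of a minimal dominating set of $G$. For an integer $k \ge \gamma(G)$, the $k$-dominating graph $D_k(G)$ is the graph whose vertices are the dominating sets of $G$ of cardinality at most $k$, with two such sets $A,B$ adjacent if and only if their symmetric difference $(A\setminus B)\cup(B\setminus A)$ consists of exactly one vertex of $G$. *)

theory Defs
  imports Main
begin

definition simple_graph :: "'a set \<Rightarrow> ('a \<Rightarrow> 'a \<Rightarrow> bool) \<Rightarrow> bool" where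
  "simple_graph V E \<longleftrightarrow> finite V \<and> (\<forall>u v. E u v \<longrightarrow> u \<in> V \<and> v \<in> V)
     \<and> (\<forall>u v. E u v \<longrightarrow> E v u) \<and> (\<forall>v. \<not> E v v)"

definition dominating_set :: "'a set \<Rightarrow> ('a \<Rightarrow> 'a \<Rightarrow> bool) \<Rightarrow> 'a set \<Rightarrow> bool" where
  "dominating_set V E S \<longleftrightarrow> S \<subseteq> V \<and> (\<forall>v \<in> V - S. \<exists>u \<in> S. E v u)"

definition minimal_dominating_set :: "'a set \<Rightarrow> ('a \<Rightarrow> 'a \<Rightarrow> bool) \<Rightarrow> 'a set \<Rightarrow> bool" where
  "minimal_dominating_set V E S \<longleftrightarrow> dominating_set V E S \<and>
     (\<forall>T. T \<subset> S \<longrightarrow> \<not> dominating_set V E T)"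

definition domination_number :: "'a set \<Rightarrow> ('a \<Rightarrow> 'a \<Rightarrow> bool) \<Rightarrow> nat" where
  "domination_number V E = Min (card ` {S. dominating_set V E S})"

definition upper_domination_number :: "'a set \<Rightarrow> ('a \<Rightarrow> 'a \<Rightarrow> bool) \<Rightarrow> nat" where
  "upper_domination_number V E = Max (card ` {S. minimal_dominating_set V E S})"

definition dom_graph_vertices :: "'a set \<Rightarrow> ('a \<Rightarrow> 'a \<Rightarrow> bool) \<Rightarrow> nat \<Rightarrow> 'a set set" where
  "dom_graph_vertices V E k = {S. dominating_set V E S \<and> card S \<le> k}"

definition dom_graph_adj :: "'a set \<Rightarrow> ('a \<Rightarrow> 'a \<Rightarrow> bool) \<Rightarrow> nat \<Rightarrow> 'a set \<Rightarrow> 'a set \<Rightarrow> bool" where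
  "dom_graph_adj V E k A B \<longleftrightarrow> A \<in> dom_graph_vertices V E k \<and> B \<in> dom_graph_vertices V E k
     \<and> (\<exists>x. (A - B) \<union> (B - A) = {x})"

definition graph_connected :: "'b set \<Rightarrow> ('b \<Rightarrow> 'b \<Rightarrow> bool) \<Rightarrow> bool" where
  "graph_connected W adj \<longleftrightarrow> (\<forall>a \<in> W. \<forall>b \<in> W. adj\<^sup>*\<^sup>* a b)"

definition dom_graph_connected :: "'a set \<Rightarrow> ('a \<Rightarrow> 'a \<Rightarrow> bool) \<Rightarrow> nat \<Rightarrow> bool" where
  "dom_graph_connected V E k \<longleftrightarrow>
     graph_connected (dom_graph_vertices V E k) (dom_graph_adj V E k)"

end

theory Submission
  imports Defs
begin

lemma dom_super:
  assumes "dominating_set V E T" "T \<subseteq> S" "S \<subseteq> V"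
  shows "dominating_set V E S"
  using assms unfolding dominating_set_def by blast

lemma step_down:
  assumes g: "simple_graph V E" and k: "k > upper_domination_number V E"
    and S: "S \<in> dom_graph_vertices V E (k+1)"
  shows "\<exists>S'. S' \<in> dom_graph_vertices V E k \<and>
     (S' = S \<or> (dom_graph_adj V E (k+1) S S' \<and> dom_graph_adj V E (k+1) S' S))"
proof (cases "card S \<le> k")
  case True
  then show ?thesis using S unfolding dom_graph_vertices_def by blast
next
  case False
  have fin: "finite V" using g unfolding simple_graph_def by blast
  have SV: "S \<subseteq> V" and dS: "dominating_set V E S" and c: "card S = k+1"
    using S False unfolding dom_graph_vertices_def dominating_set_def by auto
  have finS: "finite S" using SV fin finite_subset by blast
  have "\<not> minimal_dominating_set V E S"
  proof
    assume m: "minimal_dominating_set V E S"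
    have "finite (card ` {S. minimal_dominating_set V E S})"
    proof -
      have "{S. minimal_dominating_set V E S} \<subseteq> Pow V"
        unfolding minimal_dominating_set_def dominating_set_def by blast
      then show ?thesis using fin by (meson finite_Pow_iff finite_imageI finite_subset)
    qed
    then have "card S \<le> upper_domination_number V E"
      unfolding upper_domination_number_def using m by (simp add: Max_ge)
    then show False using k c by simp
  qed
  then obtain T where T: "T \<subset> S" "dominating_set V E T"
    using dS unfolding minimal_dominating_set_def by blast
  then obtain x where x: "x \<in> S" "x \<notin> T" by blast
  have d': "dominating_set V E (S - {x})"
  proof (rule dom_super[OF T(2)])
    show "T \<subseteq> S - {x}" using T(1) x(2) by blast
    show "S - {x} \<subseteq> V" using SV by blast
  qed
  have c': "card (S - {x}) = k" using c x finS by simp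
  have v1: "S - {x} \<in> dom_graph_vertices V E k"
    using d' c' unfolding dom_graph_vertices_def by simp
  have v2: "S - {x} \<in> dom_graph_vertices V E (k+1)"
    using d' c' unfolding dom_graph_vertices_def by simp
  have sd1: "(S - (S - {x})) \<union> ((S - {x}) - S) = {x}" using x by blast
  have sd2: "((S - {x}) - S) \<union> (S - (S - {x})) = {x}" using x by blast
  show ?thesis
  proof (rule exI[of _ "S - {x}"], intro conjI disjI2)
    show "S - {x} \<in> dom_graph_vertices V E k" by (rule v1)
    show "dom_graph_adj V E (k+1) S (S - {x})"
      unfolding dom_graph_adj_def using v2 S sd1 by (intro conjI exI) 
    show "dom_graph_adj V E (k+1) (S - {x}) S"
      unfolding dom_graph_adj_def using v2 S sd2 by (intro conjI exI) 
  qed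
qed

theorem lemma4:
  fixes V :: "'a set" and E :: "'a \<Rightarrow> 'a \<Rightarrow> bool" and k :: nat
  assumes "simple_graph V E"
    and "k > upper_domination_number V E"
    and "dom_graph_connected V E k"
  shows "dom_graph_connected V E (k + 1)"
proof -
  have sub: "dom_graph_vertices V E k \<subseteq> dom_graph_vertices V E (k+1)"
    unfolding dom_graph_vertices_def by auto
  have mono: "\<And>A B. dom_graph_adj V E k A B \<Longrightarrow> dom_graph_adj V E (k+1) A B"
    using sub unfolding dom_graph_adj_def by blast
  have monostar: "\<And>A B. (dom_graph_adj V E k)\<^sup>*\<^sup>* A B \<Longrightarrow> (dom_graph_adj V E (k+1))\<^sup>*\<^sup>* A B"
  proof -
    fix A B assume "(dom_graph_adj V E k)\<^sup>*\<^sup>* A B"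
    then show "(dom_graph_adj V E (k+1))\<^sup>*\<^sup>* A B"
      by (induction rule: rtranclp_induct) (use mono in \<open>auto intro: rtranclp.rtrancl_into_rtrancl simp del: Suc_eq_plus1 simp add: Suc_eq_plus1[symmetric]\<close>)
  qed
  show ?thesis
    unfolding dom_graph_connected_def graph_connected_def
  proof (intro ballI)
    fix A B assume A: "A \<in> dom_graph_vertices V E (k+1)" and B: "B \<in> dom_graph_vertices V E (k+1)"
    obtain A' where A': "A' \<in> dom_graph_vertices V E k"
      "A' = A \<or> (dom_graph_adj V E (k+1) A A' \<and> dom_graph_adj V E (k+1) A' A)"
      using step_down[OF assms(1,2) A] by blast
    obtain B' where B': "B' \<in> dom_graph_vertices V E k"
      "B' = B \<or> (dom_graph_adj V E (k+1) B B' \<and> dom_graph_adj V E (k+1) B' B)"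
      using step_down[OF assms(1,2) B] by blast
    have 1: "(dom_graph_adj V E (k+1))\<^sup>*\<^sup>* A A'" using A'(2) by auto
    have 3: "(dom_graph_adj V E (k+1))\<^sup>*\<^sup>* B' B" using B'(2) by auto
    have 2: "(dom_graph_adj V E (k+1))\<^sup>*\<^sup>* A' B'"
    proof -
      have "(dom_graph_adj V E k)\<^sup>*\<^sup>* A' B'"
        using assms(3) A'(1) B'(1) unfolding dom_graph_connected_def graph_connected_def by blast
      then show ?thesis by (rule monostar)
    qed
    show "(dom_graph_adj V E (k+1))\<^sup>*\<^sup>* A B"
      using 1 2 3 by (meson rtranclp_trans)
  qed
qed

end
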